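(* Let $r\ge 3$ be an integer and for $k\in\mathbb Z_{\ge0}$ put $q_k=\frac{1+r^k(r-2)}{r-1}$. Then for every $n\ge1$, the set $S=\{t\cdot(1,r,r^2,\dots,r^{n-1}) : t\in\mathbb Z_{q_n}\}\subseteq\mathbb Z_{q_n}^n$ (arithmetic modulo $q_n$) is an independent set of size $q_n$ in $C_{q_{n-1},q_n}^{\boxtimes n}$.
   Context: For positive integers $q,d$ with $q\ge 2d$, the circular graph $C_{d,q}$ has vertex set $\mathbb Z_q$, two distinct vertices $x,y$ being adjacent iff $\min\{|x-y|,q-|x-y|\}<d$ (viewing $x,y$ as integers in $\{0,\dots,q-1\}$). For a graph $G=(V,E)$, $G^{\boxtimes n}$ has vertex set $V^n$, distinct $(u_i)$, $(v_i)$ adjacent iff for every $i$ either $u_i=v_i$ or $u_iv_i\in E$. An independent set is a set of pairwise non-adjacent vertices. *)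

theory Defs
  imports Main
begin

text \<open>Vertices of the circular graph C_{d,q} are 0,...,q-1 (representing Z_q).
  Two distinct vertices x,y are adjacent iff min(|x-y|, q-|x-y|) < d.\<close>
definition circ_adj :: "nat \<Rightarrow> nat \<Rightarrow> nat \<Rightarrow> nat \<Rightarrow> bool" where
  "circ_adj d q x y \<longleftrightarrow> x < q \<and> y < q \<and> x \<noteq> y \<and>
     (let dd = (if x \<le> y then y - x else x - y) in min dd (q - dd) < d)"

definition strong_power_verts :: "'a set \<Rightarrow> nat \<Rightarrow> 'a list set" where
  "strong_power_verts V n = {xs. length xs = n \<and> set xs \<subseteq> V}"

definition strong_power_adj :: "('a \<Rightarrow> 'a \<Rightarrow> bool) \<Rightarrow> nat \<Rightarrow> 'a list \<Rightarrow> 'a list \<Rightarrow> bool" where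
  "strong_power_adj E n u v \<longleftrightarrow> u \<noteq> v \<and> (\<forall>i<n. u ! i = v ! i \<or> E (u ! i) (v ! i))"

definition independent_set :: "'a set \<Rightarrow> ('a \<Rightarrow> 'a \<Rightarrow> bool) \<Rightarrow> 'a set \<Rightarrow> bool" where
  "independent_set V E S \<longleftrightarrow> S \<subseteq> V \<and> (\<forall>u\<in>S. \<forall>v\<in>S. \<not> E u v)"

text \<open>q_k = (1 + r^k (r-2)) / (r-1); the division is exact for r \<ge> 2.\<close>
definition qseq :: "nat \<Rightarrow> nat \<Rightarrow> nat" where
  "qseq r k = (1 + r ^ k * (r - 2)) div (r - 1)"

end

theory Submission
  imports Defs
begin

fun gq :: "int \<Rightarrow> nat \<Rightarrow> int" where
  "gq r 0 = 1"
| "gq r (Suc k) = r * gq r k - 1"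

lemma gq_pos: "r \<ge> 3 \<Longrightarrow> gq r k \<ge> 1"
proof (induction k)
  case 0 then show ?case by simp
next
  case (Suc k)
  then have "r * gq r k \<ge> 3 * 1" by (intro mult_mono) auto
  then show ?case by simp
qed

lemma gq_id: "(r - 1) * gq r k = 1 + r ^ k * (r - 2)"
proof (induction k)
  case 0 then show ?case by simp
next
  case (Suc k)
  have "(r-1)*gq r (Suc k) = r*((r-1)*gq r k) - (r-1)" by (simp add: algebra_simps)
  also have "\<dots> = r*(1 + r ^ k * (r - 2)) - (r-1)" using Suc by simp
  also have "\<dots> = 1 + r ^ Suc k * (r - 2)" by (simp add: algebra_simps)
  finally show ?case .
qed

lemma qseq_eq:
  assumes "r \<ge> 3"
  shows "int (qseq r k) = gq (int r) k"
proof -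
  have "int (qseq r k) = int (1 + r ^ k * (r - 2)) div int (r - 1)"
    unfolding qseq_def by (simp add: zdiv_int)
  also have "int (1 + r ^ k * (r - 2)) = 1 + int r ^ k * (int r - 2)"
    using assms by (simp add: of_nat_diff)
  also have "int (r - 1) = int r - 1" using assms by (simp add: of_nat_diff)
  also have "(1 + int r ^ k * (int r - 2)) div (int r - 1) = gq (int r) k"
    using gq_id[of "int r" k, symmetric] assms by simp
  finally show ?thesis .
qed

lemma aux1:
  fixes r a e q :: int
  assumes "r > 0" "\<bar>r*a + e\<bar> < r*q - 1" "\<bar>e\<bar> \<le> 1"
  shows "\<bar>a\<bar> < q"
proof -
  have h1: "\<bar>r*a\<bar> = r*\<bar>a\<bar>" using assms(1) by (simp add: abs_mult)
  have "\<bar>r*a\<bar> \<le> \<bar>r*a + e\<bar> + \<bar>e\<bar>" by linarith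
  then have "r*\<bar>a\<bar> < r*q" using assms h1 by linarith
  then show ?thesis using assms(1) mult_less_cancel_left_pos by blast
qed

lemma aux2:
  fixes k Q D a b r :: int
  assumes "a - b = k * Q" "\<bar>a\<bar> \<le> r * (D - 1)" "\<bar>b\<bar> \<le> D - 1" "Q = r * D - 1" "D \<ge> 1" "r \<ge> 3"
  shows "\<bar>k\<bar> < 2"
proof (rule ccontr)
  assume c: "\<not> \<bar>k\<bar> < 2"
  have "r*D \<ge> 3*1" using assms by (intro mult_mono) auto
  then have Qp: "Q > 0" using assms by linarith
  have f1: "\<bar>k\<bar> * Q \<ge> 2 * Q" using c Qp by (intro mult_right_mono) auto
  have f2: "\<bar>a - b\<bar> = \<bar>k\<bar> * Q" using Qp assms(1) by (simp add: abs_mult)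
  have f3: "(r-1)*(D+1) > 0" using assms by simp
  have f4: "(r-1)*(D+1) = r*D + r - D - 1" by (simp add: algebra_simps)
  have f5: "r * (D - 1) = r*D - r" by (simp add: algebra_simps)
  have f6: "\<bar>a - b\<bar> \<le> \<bar>a\<bar> + \<bar>b\<bar>" by (rule abs_triangle_ineq4)
  show False using f1 f2 f3 f4 f5 f6 assms(2,3,4) by (smt (verit))
qed

lemma core:
  fixes r :: int and m :: nat and y :: "nat \<Rightarrow> int"
  assumes r3: "r \<ge> 3"
  and dv: "\<forall>i<m. gq r (Suc m) dvd (r * y i - y (Suc i))"
  and bd: "\<forall>i\<le>m. \<bar>y i\<bar> < gq r m"
  shows "y 0 = 0"
proof -
  define Q where "Q = gq r (Suc m)"
  define D where "D = gq r m"
  have D1: "D \<ge> 1" unfolding D_def using gq_pos r3 by blast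
  have QD: "Q = r * D - 1" unfolding Q_def D_def by simp
  have "r*D \<ge> 3*D" using r3 D1 by simp
  then have QgeD: "Q \<ge> D" using QD D1 by linarith
  define k where "k i = (r * y i - y (Suc i)) div Q" for i
  have kQ: "r * y i - y (Suc i) = k i * Q" if "i < m" for i
    using dv that unfolding k_def Q_def by auto
  have k01: "k i = -1 \<or> k i = 0 \<or> k i = 1" if "i < m" for i
  proof -
    have "\<bar>y i\<bar> \<le> D - 1" "\<bar>y (Suc i)\<bar> \<le> D - 1" using bd that unfolding D_def by force+
    then have "\<bar>r * y i\<bar> \<le> r * (D - 1)" using r3 by (simp add: abs_mult mult_left_mono)
    then have "\<bar>k i\<bar> < 2" using aux2[OF kQ[OF that] _ _ QD D1 r3] \<open>\<bar>y (Suc i)\<bar> \<le> D - 1\<close> by blast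
    then show ?thesis by linarith
  qed
  define Y where "Y j t = y j - (\<Sum>s<t. k (j+s) * gq r (m - s))" for j t
  define E where "E j t = (\<Sum>s<t. k (j+s))" for j t
  have YS: "Y j (Suc t) = Y j t - k (j+t) * gq r (m - t)" for j t
    unfolding Y_def by simp
  have ES: "E j (Suc t) = E j t + k (j+t)" for j t
    unfolding E_def by simp
  have Y0: "Y j 0 = y j" for j unfolding Y_def by simp
  have E0: "E j 0 = 0" for j unfolding E_def by simp
  have rec: "Y (Suc j) t = r * Y j (Suc t) + E j (Suc t)" if "j + t < m" for j t
    using that
  proof (induction t arbitrary: j)
    case 0
    have "Y (Suc j) 0 = y (Suc j)" by (simp add: Y0)
    moreover have "r * Y j (Suc 0) = r * y j - r * k j * D" by (simp add: YS Y0 D_def algebra_simps)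
    moreover have "E j (Suc 0) = k j" by (simp add: ES E0)
    moreover have "r * y j - y (Suc j) = k j * (r * D - 1)" using kQ[of j] 0 QD by simp
    moreover have "k j * (r * D - 1) = r * k j * D - k j" by (simp add: algebra_simps)
    ultimately show ?case by linarith
  next
    case (Suc t)
    then have IH: "Y (Suc j) t = r * Y j (Suc t) + E j (Suc t)" by simp
    have "m - t = Suc (m - Suc t)" using Suc.prems by simp
    then have g: "gq r (m - t) = r * gq r (m - Suc t) - 1" by simp
    define c where "c = k (j + Suc t)"
    define G where "G = gq r (m - Suc t)"
    have a1: "Y (Suc j) (Suc t) = Y (Suc j) t - c * (r * G - 1)"
      using YS[of "Suc j" t] g unfolding c_def G_def by simp
    have a2: "Y j (Suc (Suc t)) = Y j (Suc t) - c * G"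
      using YS[of j "Suc t"] unfolding c_def G_def by simp
    have a3: "E j (Suc (Suc t)) = E j (Suc t) + c"
      using ES[of j "Suc t"] unfolding c_def by simp
    have a4: "c * (r * G - 1) = r * (c * G) - c" by (simp add: algebra_simps)
    have a5: "r * Y j (Suc (Suc t)) = r * Y j (Suc t) - r * (c * G)" unfolding a2 by (simp add: right_diff_distrib)
    show ?case using IH a1 a2 a3 a4 a5 by linarith
  qed
  define Inv where "Inv t \<longleftrightarrow> (\<forall>j. j + t \<le> m \<longrightarrow>
      \<bar>Y j t\<bar> < gq r (m - t) \<and>
      (E j t = 0 \<or> (E j t = 1 \<and> Y j t < 0) \<or> (E j t = -1 \<and> 0 < Y j t)) \<and>
      (j + t < m \<longrightarrow> (k (j+t) = 1 \<longrightarrow> 0 < Y j t) \<and> (k (j+t) = -1 \<longrightarrow> Y j t < 0)))" for t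
  have inv: "Inv t" if "t \<le> m" for t
    using that
  proof (induction t)
    case 0
    show ?case unfolding Inv_def
    proof (intro allI impI conjI)
      fix j assume j: "j + 0 \<le> m"
      show "\<bar>Y j 0\<bar> < gq r (m - 0)" using bd j by (simp add: Y0)
      show "E j 0 = 0 \<or> (E j 0 = 1 \<and> Y j 0 < 0) \<or> (E j 0 = -1 \<and> 0 < Y j 0)" by (simp add: E0)
    next
      fix j assume j: "j + 0 < m" and kk: "k (j+0) = 1"
      have "r * y j = y (Suc j) + Q" using kQ[of j] j kk by simp
      moreover have "\<bar>y (Suc j)\<bar> < D" using bd j unfolding D_def by simp
      ultimately have "r * y j > 0" using QgeD by linarith
      then show "0 < Y j 0" using r3 by (simp add: Y0 zero_less_mult_iff)
    next
      fix j assume j: "j + 0 < m" and kk: "k (j+0) = -1"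
      have "r * y j = y (Suc j) - Q" using kQ[of j] j kk by simp
      moreover have "\<bar>y (Suc j)\<bar> < D" using bd j unfolding D_def by simp
      ultimately have "r * y j < 0" using QgeD by linarith
      then show "Y j 0 < 0" using r3 by (simp add: Y0 mult_less_0_iff)
    qed
  next
    case (Suc t)
    then have IH: "Inv t" by simp
    have "m - t = Suc (m - Suc t)" using Suc.prems by simp
    then have gt: "gq r (m - t) = r * gq r (m - Suc t) - 1" by simp
    show ?case unfolding Inv_def
    proof (intro allI impI)
      fix j assume j: "j + Suc t \<le> m"
      have A: "\<bar>Y j t\<bar> < gq r (m - t)"
        "E j t = 0 \<or> (E j t = 1 \<and> Y j t < 0) \<or> (E j t = -1 \<and> 0 < Y j t)"
        "k (j+t) = 1 \<longrightarrow> 0 < Y j t" "k (j+t) = -1 \<longrightarrow> Y j t < 0"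
        using IH j unfolding Inv_def by auto
      have B: "\<bar>Y (Suc j) t\<bar> < gq r (m - t)"
        "Suc j + t < m \<longrightarrow> (k (Suc j+t) = 1 \<longrightarrow> 0 < Y (Suc j) t) \<and> (k (Suc j+t) = -1 \<longrightarrow> Y (Suc j) t < 0)"
        using IH j unfolding Inv_def by auto
      have kk: "k (j+t) = -1 \<or> k (j+t) = 0 \<or> k (j+t) = 1" using k01 j by simp
      have Yn: "Y j (Suc t) = Y j t - k (j+t) * gq r (m - t)" by (rule YS)
      have En: "E j (Suc t) = E j t + k (j+t)" by (rule ES)
      have Elem: "E j (Suc t) = 0 \<or> (E j (Suc t) = 1 \<and> Y j (Suc t) < 0) \<or> (E j (Suc t) = -1 \<and> 0 < Y j (Suc t))"
        using kk A Yn En by auto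
      have Eb: "\<bar>E j (Suc t)\<bar> \<le> 1" using Elem by auto
      have R: "Y (Suc j) t = r * Y j (Suc t) + E j (Suc t)" using rec j by simp
      have bnd: "\<bar>Y j (Suc t)\<bar> < gq r (m - Suc t)"
        using aux1[of r "Y j (Suc t)" "E j (Suc t)" "gq r (m - Suc t)"] r3 B(1) R gt Eb by simp
      have sg: "(j + Suc t < m \<longrightarrow> (k (j + Suc t) = 1 \<longrightarrow> 0 < Y j (Suc t)) \<and> (k (j + Suc t) = -1 \<longrightarrow> Y j (Suc t) < 0))"
      proof (intro impI conjI)
        assume jm: "j + Suc t < m" and k1: "k (j + Suc t) = 1"
        have pos: "0 < Y (Suc j) t" using B(2) jm k1 by simp
        show "0 < Y j (Suc t)"
        proof (rule ccontr)
          assume "\<not> 0 < Y j (Suc t)"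
          then have "r * Y j (Suc t) \<le> 0" using r3 by (simp add: mult_nonneg_nonpos)
          then have "E j (Suc t) = 1" using pos R Eb by linarith
          then have "Y j (Suc t) < 0" using Elem by auto
          then have "Y j (Suc t) \<le> -1" by simp
          then have "r * Y j (Suc t) \<le> r * (-1)" using r3 by (intro mult_left_mono) auto
          then show False using pos R Eb r3 by linarith
        qed
      next
        assume jm: "j + Suc t < m" and k1: "k (j + Suc t) = -1"
        have neg: "Y (Suc j) t < 0" using B(2) jm k1 by simp
        show "Y j (Suc t) < 0"
        proof (rule ccontr)
          assume "\<not> Y j (Suc t) < 0"
          then have "r * Y j (Suc t) \<ge> 0" using r3 by simp
          then have "E j (Suc t) = -1" using neg R Eb by linarith
          then have "Y j (Suc t) > 0" using Elem by auto
          then have "Y j (Suc t) \<ge> 1" by simp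
          then have "r * Y j (Suc t) \<ge> r * 1" using r3 by (intro mult_left_mono) auto
          then show False using neg R Eb r3 by linarith
        qed
      qed
      show "\<bar>Y j (Suc t)\<bar> < gq r (m - Suc t) \<and>
        (E j (Suc t) = 0 \<or> (E j (Suc t) = 1 \<and> Y j (Suc t) < 0) \<or> (E j (Suc t) = -1 \<and> 0 < Y j (Suc t))) \<and>
        (j + Suc t < m \<longrightarrow> (k (j + Suc t) = 1 \<longrightarrow> 0 < Y j (Suc t)) \<and> (k (j + Suc t) = -1 \<longrightarrow> Y j (Suc t) < 0))"
        using bnd Elem sg by blast
    qed
  qed
  have backw: "Y 0 (m - d) = 0" if "d \<le> m" for d
    using that
  proof (induction d)
    case 0
    have "\<bar>Y 0 m\<bar> < gq r 0" using inv[of m] unfolding Inv_def by auto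
    then show ?case by simp
  next
    case (Suc d)
    define t where "t = m - Suc d"
    have tm: "t < m" "m - d = Suc t" using Suc.prems unfolding t_def by auto
    have z: "Y 0 (Suc t) = 0" using Suc tm by simp
    have b: "\<bar>Y 0 t\<bar> < gq r (m - t)" using inv[of t] tm unfolding Inv_def by auto
    have gp: "gq r (m - t) \<ge> 1" using gq_pos r3 by blast
    have e: "Y 0 t = k t * gq r (m - t)" using z YS[of 0 t] by simp
    have "k t = 0"
    proof (rule ccontr)
      assume "k t \<noteq> 0"
      then have "\<bar>k t\<bar> \<ge> 1" by simp
      then have "\<bar>k t\<bar> * gq r (m - t) \<ge> 1 * gq r (m - t)" using gp by (intro mult_right_mono) auto
      then show False using b e gp by (simp add: abs_mult)
    qed
    then show ?case using e t_def by simp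
  qed
  show ?thesis using backw[of m] by (simp add: Y0)
qed

theorem theorem9p3:
  fixes r n :: nat
  assumes "r \<ge> 3" and "n \<ge> 1"
  defines "S \<equiv> (\<lambda>t. map (\<lambda>i. (t * r ^ i) mod qseq r n) [0..<n]) ` {0..<qseq r n}"
  shows "independent_set (strong_power_verts {0..<qseq r n} n)
           (strong_power_adj (circ_adj (qseq r (n - 1)) (qseq r n)) n) S
         \<and> card S = qseq r n"
proof -
  obtain m where nm: "n = Suc m" using assms(2) by (cases n) auto
  define Q where "Q = qseq r n"
  define D where "D = qseq r (n - 1)"
  have QI: "int Q = gq (int r) (Suc m)" unfolding Q_def nm using qseq_eq assms(1) by blast
  have DI: "int D = gq (int r) m" unfolding D_def nm using qseq_eq assms(1) by simp
  have r3: "int r \<ge> 3" using assms(1) by simp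
  have D1: "D \<ge> 1" using DI gq_pos[OF r3, of m] by simp
  have Q1: "Q \<ge> 1" using QI gq_pos[OF r3, of "Suc m"] by simp
  define f where "f = (\<lambda>t. map (\<lambda>i. (t * r ^ i) mod Q) [0..<n])"
  have Sf: "S = f ` {0..<Q}" unfolding S_def f_def Q_def by simp
  have f0: "f t ! 0 = t" if "t < Q" for t
    using that nm unfolding f_def by (simp del: upt_Suc add: nth_map)
  have fi: "f t ! i = (t * r ^ i) mod Q" if "i < n" for t i
    using that unfolding f_def by simp
  have inj: "inj_on f {0..<Q}"
    by (rule inj_onI) (metis atLeastLessThan_iff f0)
  have card: "card S = Q" unfolding Sf using card_image[OF inj] by simp
  have sub: "S \<subseteq> strong_power_verts {0..<Q} n"
    unfolding Sf strong_power_verts_def f_def using Q1 by auto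
  have noadj: "\<not> strong_power_adj (circ_adj D Q) n (f a) (f b)" if ab: "a < Q" "b < Q" for a b
  proof
    assume adj: "strong_power_adj (circ_adj D Q) n (f a) (f b)"
    then have neq: "a \<noteq> b" unfolding strong_power_adj_def by auto
    have comp: "\<forall>i<n. f a ! i = f b ! i \<or> circ_adj D Q (f a ! i) (f b ! i)"
      using adj unfolding strong_power_adj_def by auto
    define z where "z i = int ((a * r ^ i) mod Q) - int ((b * r ^ i) mod Q)" for i
    define y where "y i = (if 2 * \<bar>z i\<bar> \<le> int Q then z i else if z i > 0 then z i - int Q else z i + int Q)" for i
    have zb: "\<bar>z i\<bar> < int Q" for i
    proof -
      have "(a * r ^ i) mod Q < Q" "(b * r ^ i) mod Q < Q" using Q1 by auto
      then show ?thesis unfolding z_def by linarith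
    qed
    have ymod: "y i mod int Q = z i mod int Q" for i
      unfolding y_def by auto
    have zmod: "z i mod int Q = ((int a - int b) * int r ^ i) mod int Q" for i
    proof -
      have "z i = int (a * r ^ i) mod int Q - int (b * r ^ i) mod int Q"
        unfolding z_def by (simp add: zmod_int)
      then have "z i mod int Q = (int (a * r ^ i) - int (b * r ^ i)) mod int Q"
        by (simp add: mod_diff_eq)
      then show ?thesis by (simp add: algebra_simps)
    qed
    have ydvd: "int Q dvd (y i - (int a - int b) * int r ^ i)" for i
      using ymod[of i] zmod[of i] by (simp add: mod_eq_dvd_iff)
    have dv: "\<forall>i<m. gq (int r) (Suc m) dvd (int r * y i - y (Suc i))"
    proof (intro allI impI)
      fix i
      have e: "int r * y i - y (Suc i) = int r * (y i - (int a - int b) * int r ^ i)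
          - (y (Suc i) - (int a - int b) * int r ^ Suc i)"
        by (simp add: algebra_simps)
      show "gq (int r) (Suc m) dvd (int r * y i - y (Suc i))"
        unfolding e QI[symmetric] by (rule dvd_diff[OF dvd_mult[OF ydvd[of i]] ydvd[of "Suc i"]])
    qed
    have yabs: "\<bar>y i\<bar> = min \<bar>z i\<bar> (int Q - \<bar>z i\<bar>)" for i
      using zb[of i] unfolding y_def by auto
    have bd: "\<forall>i\<le>m. \<bar>y i\<bar> < gq (int r) m"
    proof (intro allI impI)
      fix i assume im: "i \<le> m"
      then have iN: "i < n" using nm by simp
      have zi: "z i = int (f a ! i) - int (f b ! i)" unfolding z_def using fi[OF iN] by simp
      show "\<bar>y i\<bar> < gq (int r) m"
      proof (cases "f a ! i = f b ! i")
        case True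
        then have "z i = 0" using zi by simp
        then show ?thesis using yabs[of i] D1 DI by simp
      next
        case False
        then have ca: "circ_adj D Q (f a ! i) (f b ! i)" using comp iN by auto
        define xa where "xa = f a ! i"
        define xb where "xb = f b ! i"
        define dd where "dd = (if xa \<le> xb then xb - xa else xa - xb)"
        have lt: "xa < Q" "xb < Q" "min dd (Q - dd) < D"
          using ca unfolding circ_adj_def xa_def xb_def dd_def Let_def by auto
        have "int dd = \<bar>z i\<bar>" unfolding dd_def zi xa_def[symmetric] xb_def[symmetric] by auto
        moreover have "dd < Q" using lt unfolding dd_def by auto
        ultimately have "min \<bar>z i\<bar> (int Q - \<bar>z i\<bar>) < int D" using lt(3) by linarith
        then show ?thesis using yabs[of i] DI by simp
      qed
    qed
    have y0: "y 0 = 0" using core[OF r3 dv bd] .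
    have "z 0 = int a - int b" unfolding z_def using ab by simp
    moreover have "z 0 = 0" using y0 zb[of 0] unfolding y_def by (auto split: if_splits)
    ultimately show False using neq by simp
  qed
  have indep: "independent_set (strong_power_verts {0..<Q} n) (strong_power_adj (circ_adj D Q) n) S"
    unfolding independent_set_def using sub noadj Sf by auto
  show ?thesis using indep card unfolding Q_def D_def by simp
qed

end
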